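(* If $\Gamma$ is $\varepsilon$-free, $\Gamma\vdash^\varepsilon M:\tau$, and $\vdash^\varepsilon M\Downarrow R$, then $R=v$ for some $v\in V^\varepsilon$ with $\Gamma\vdash^\varepsilon v:\tau$. In particular, if $\tau=\triangleright_\alpha\tau_0$, then $v=\blacktriangleright_\alpha N$ for some $N$ with $\Gamma^{-\alpha}\vdash^\varepsilon N:\tau_0$.
   Context: MiniML. Transition variables $\alpha,\beta$; transitions $A,B$ are finite sequences of them ($\varepsilon$ empty). Types $\tau::=\mathbf{int}\mid\mathbf{bool}\mid\tau\to\tau\mid\triangleright_\alpha\tau\mid\forall\alpha.\tau$; terms $M ::= x\mid n\mid bv\mid M=M\mid M+M\mid M-M\mid M*M\mid \mathbf{if}\,M\,\mathbf{then}\,M\,\mathbf{else}\,M\mid \mathbf{fix}\,f{:}\tau\to\sigma.M\mid\lambda x{:}\tau.M\mid MM\mid\blacktriangleright_\alpha M\mid\blacktriangleleft_\alpha M\mid\Lambda\alpha.M\mid M\,A$ ($n\in\mathbb{Z}$, $bv\in\{\mathbf{true},\mathbf{false}\}$). For $B=\beta_1\cdots\beta_k$, $\triangleright_B\tau=\triangleright_{\beta_1}\cdots\triangleright_{\beta_k}\tau$, $\blacktriangleright_BM=\blacktriangleright_{\beta_1}\cdots\blacktriangleright_{\beta_k}M$, $\blacktriangleleft_BM=\blacktriangleleft_{\beta_k}\cdots\blacktriangleleft_{\beta_1}M$; $\tau[\alpha:=B]$, $M[\alpha:=B]$ are capture-avoiding, replacing $\alpha$ by $B$ in transitions and $\triangleright_\alpha,\blacktriangleright_\alpha,\blacktriangleleft_\alpha$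 by $\triangleright_B,\blacktriangleright_B,\blacktriangleleft_B$. A context $\Gamma$ is a finite set $\{x_i:\tau_i@A_i\}$ with distinct $x_i$; it is $\varepsilon$-free if $A\ne\varepsilon$ for every $x:\tau@A\in\Gamma$; $\Gamma^{-A}=\{x:\tau@B\mid x:\tau@AB\in\Gamma\}$. Typing $\Gamma\vdash^AM:\tau$: (Var) $x:\tau@A\in\Gamma\Rightarrow\Gamma\vdash^Ax:\tau$; (Abs),(App) standard at a fixed stage $A$ with the bound variable declared at stage $A$; (Quote) $\Gamma\vdash^{A\alpha}M:\tau\Rightarrow\Gamma\vdash^A\blacktriangleright_\alpha M:\triangleright_\alpha\tau$; (Unquote) $\Gamma\vdash^AM:\triangleright_\alpha\tau\Rightarrow\Gamma\vdash^{A\alpha}\blacktriangleleft_\alpha M:\tau$; (Gen) $\Gamma\vdash^AM:\tau$, $\alpha$ not free in $\Gamma$ or $A$ $\Rightarrow\Gamma\vdash^A\Lambda\alpha.M:\forall\alpha.\tau$; (Ins) $\Gamma\vdash^AM:\forall\alpha.\tau\Rightarrow\Gamma\vdash^AM\,B:\tau[\alpha:=B]$; integer/Boolean constants have types $\mathbf{int}$/$\mathbf{bool}$ at any stage; $+,-,*$ take two $\mathbf{int}$ to $\mathbf{int}$, $=$ two $\mathbf{int}$ to $\mathbf{bool}$; $\mathbf{if}$ takes $\mathbf{bool}$ and two branches of a common type $\tau$ to $\tau$; (Fix) $\Gamma,f:\tau\to\sigma@A\vdash^AM:\tau\to\sigma\Rightarrow\Gamma\vdash^A\mathbf{fix}\,f{:}\tau\to\sigma.M:\tau\to\sigma$.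 Values: $V^\varepsilon ::= n\mid\mathbf{true}\mid\mathbf{false}\mid\lambda x{:}\tau.M\mid\blacktriangleright_\alpha V^\alpha\mid\Lambda\alpha.V^\varepsilon$; for $A\ne\varepsilon$: $V^A::= x\mid n\mid\mathbf{true}\mid\mathbf{false}\mid\lambda x{:}\tau.V^A\mid\mathbf{fix}\,f{:}\tau\to\sigma.V^A\mid V^AV^A\mid\blacktriangleright_\alpha V^{A\alpha}\mid\Lambda\alpha.V^A\mid V^A\,B\mid\blacktriangleleft_\alpha V^{A'}$ (last only if $A'\alpha=A$, $A'\ne\varepsilon$). Big-step evaluation $\vdash^A M\Downarrow R$ ($R$ a term or $\mathbf{err}$), left-to-right call-by-value. At stage $\varepsilon$: constants and $\lambda$-abstractions evaluate to themselves; arithmetic/comparison operators compute on integer results; $\mathbf{if}$ evaluates the condition to $\mathbf{true}$/$\mathbf{false}$ then the corresponding branch; $MN\Downarrow R$ if $M\Downarrow\lambda x{:}\tau.M'$, $N\Downarrow v$, $M'[x:=v]\Downarrow R$; $\mathbf{fix}\,f{:}\tau\to\sigma.M\Downarrow R$ if $M[f:=\mathbf{fix}\,f{:}\tau\to\sigma.M]\Downarrow R$; $M\,B\Downarrow R$ if $M\Downarrow\Lambda\alpha.N$ and $N[\alpha:=B]\Downarrow R$. At any stage $A$: $\vdash^A\blacktriangleright_\alpha M\Downarrow\blacktriangleright_\alpha N$ if $\vdash^{A\alpha}M\Downarrow N$; $\vdash^A\Lambda\alpha.M\Downarrow\Lambda\alpha.N$ if $\vdash^AM\Downarrow N$. $\vdash^\alpha\blacktriangleleft_\alpha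 M\Downarrow N$ if $\vdash^\varepsilon M\Downarrow\blacktriangleright_\alpha N$; $\vdash^{A\alpha}\blacktriangleleft_\alpha M\Downarrow\blacktriangleleft_\alpha N$ if $A\ne\varepsilon$, $\vdash^AM\Downarrow N$. At stage $A\ne\varepsilon$ other constructors are rebuilt with subterms evaluated at stage $A$. $\mathbf{err}$ is produced at stage $\varepsilon$ by a variable, by an ill-shaped intermediate result (non-integer operand, non-Boolean condition, non-$\lambda$ function, non-$\Lambda$ operand of instantiation, non-$\blacktriangleright_\alpha$ operand of $\blacktriangleleft_\alpha$ at stage $\alpha$), by $\blacktriangleleft_\alpha M$ at stage $\varepsilon$, and propagates from any evaluated premise. *)

theory Defs
  imports Main
begin

(* MiniML with de Bruijn indices, both for term variables and for
   transition variables.  A transition is a list of transition variables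
   (indices); [] is epsilon, stage  A alpha  is  A @ [alpha]. *)

type_synonym tvar = nat
type_synonym trans = "tvar list"

datatype ty =
    TInt
  | TBool
  | TFun ty ty
  | TNext tvar ty
  | TAll ty              (* forall alpha. tau ; binds transition index 0 *)

datatype tm =
    MVar nat
  | MNum int
  | MBool bool
  | MEq tm tm
  | MPlus tm tm
  | MMinus tm tm
  | MTimes tm tm
  | MIf tm tm tm
  | MFix ty ty tm        (* fix f:tau->sigma. M ; binds term index 0 *)
  | MLam ty tm
  | MApp tm tm
  | MQuote tvar tm
  | MUnquote tvar tm
  | MTLam tm             (* Lambda alpha. M ; binds transition index 0 *)
  | MTApp tm trans

fun next_seq :: "trans \<Rightarrow> ty \<Rightarrow> ty" where
  "next_seq [] \<tau> = \<tau>"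
| "next_seq (b # bs) \<tau> = TNext b (next_seq bs \<tau>)"

fun quote_seq :: "trans \<Rightarrow> tm \<Rightarrow> tm" where
  "quote_seq [] M = M"
| "quote_seq (b # bs) M = MQuote b (quote_seq bs M)"

(* \<blacktriangleleft>_B M = \<blacktriangleleft>_bk ... \<blacktriangleleft>_b1 M *)
fun unquote_seq :: "trans \<Rightarrow> tm \<Rightarrow> tm" where
  "unquote_seq [] M = M"
| "unquote_seq (b # bs) M = unquote_seq bs (MUnquote b M)"

definition tv_shift :: "nat \<Rightarrow> tvar \<Rightarrow> tvar" where
  "tv_shift c a = (if c \<le> a then Suc a else a)"

primrec ty_tshift :: "nat \<Rightarrow> ty \<Rightarrow> ty" where
  "ty_tshift c TInt = TInt"
| "ty_tshift c TBool = TBool"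
| "ty_tshift c (TFun \<tau> \<sigma>) = TFun (ty_tshift c \<tau>) (ty_tshift c \<sigma>)"
| "ty_tshift c (TNext a \<tau>) = TNext (tv_shift c a) (ty_tshift c \<tau>)"
| "ty_tshift c (TAll \<tau>) = TAll (ty_tshift (Suc c) \<tau>)"

primrec tm_tshift :: "nat \<Rightarrow> tm \<Rightarrow> tm" where
  "tm_tshift c (MVar x) = MVar x"
| "tm_tshift c (MNum n) = MNum n"
| "tm_tshift c (MBool b) = MBool b"
| "tm_tshift c (MEq M N) = MEq (tm_tshift c M) (tm_tshift c N)"
| "tm_tshift c (MPlus M N) = MPlus (tm_tshift c M) (tm_tshift c N)"
| "tm_tshift c (MMinus M N) = MMinus (tm_tshift c M) (tm_tshift c N)"
| "tm_tshift c (MTimes M N) = MTimes (tm_tshift c M) (tm_tshift c N)"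
| "tm_tshift c (MIf L M N) = MIf (tm_tshift c L) (tm_tshift c M) (tm_tshift c N)"
| "tm_tshift c (MFix \<tau> \<sigma> M) = MFix (ty_tshift c \<tau>) (ty_tshift c \<sigma>) (tm_tshift c M)"
| "tm_tshift c (MLam \<tau> M) = MLam (ty_tshift c \<tau>) (tm_tshift c M)"
| "tm_tshift c (MApp M N) = MApp (tm_tshift c M) (tm_tshift c N)"
| "tm_tshift c (MQuote a M) = MQuote (tv_shift c a) (tm_tshift c M)"
| "tm_tshift c (MUnquote a M) = MUnquote (tv_shift c a) (tm_tshift c M)"
| "tm_tshift c (MTLam M) = MTLam (tm_tshift (Suc c) M)"
| "tm_tshift c (MTApp M A) = MTApp (tm_tshift c M) (map (tv_shift c) A)"

definition tv_subst :: "nat \<Rightarrow> trans \<Rightarrow> tvar \<Rightarrow> trans" where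
  "tv_subst j B a = (if a = j then B else if j < a then [a - 1] else [a])"

definition trans_subst :: "nat \<Rightarrow> trans \<Rightarrow> trans \<Rightarrow> trans" where
  "trans_subst j B A = concat (map (tv_subst j B) A)"

primrec ty_tsubst :: "nat \<Rightarrow> trans \<Rightarrow> ty \<Rightarrow> ty" where
  "ty_tsubst j B TInt = TInt"
| "ty_tsubst j B TBool = TBool"
| "ty_tsubst j B (TFun \<tau> \<sigma>) = TFun (ty_tsubst j B \<tau>) (ty_tsubst j B \<sigma>)"
| "ty_tsubst j B (TNext a \<tau>) = next_seq (tv_subst j B a) (ty_tsubst j B \<tau>)"
| "ty_tsubst j B (TAll \<tau>) = TAll (ty_tsubst (Suc j) (map Suc B) \<tau>)"

primrec tm_tsubst :: "nat \<Rightarrow> trans \<Rightarrow> tm \<Rightarrow> tm" where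
  "tm_tsubst j B (MVar x) = MVar x"
| "tm_tsubst j B (MNum n) = MNum n"
| "tm_tsubst j B (MBool b) = MBool b"
| "tm_tsubst j B (MEq M N) = MEq (tm_tsubst j B M) (tm_tsubst j B N)"
| "tm_tsubst j B (MPlus M N) = MPlus (tm_tsubst j B M) (tm_tsubst j B N)"
| "tm_tsubst j B (MMinus M N) = MMinus (tm_tsubst j B M) (tm_tsubst j B N)"
| "tm_tsubst j B (MTimes M N) = MTimes (tm_tsubst j B M) (tm_tsubst j B N)"
| "tm_tsubst j B (MIf L M N) = MIf (tm_tsubst j B L) (tm_tsubst j B M) (tm_tsubst j B N)"
| "tm_tsubst j B (MFix \<tau> \<sigma> M) = MFix (ty_tsubst j B \<tau>) (ty_tsubst j B \<sigma>) (tm_tsubst j B M)"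
| "tm_tsubst j B (MLam \<tau> M) = MLam (ty_tsubst j B \<tau>) (tm_tsubst j B M)"
| "tm_tsubst j B (MApp M N) = MApp (tm_tsubst j B M) (tm_tsubst j B N)"
| "tm_tsubst j B (MQuote a M) = quote_seq (tv_subst j B a) (tm_tsubst j B M)"
| "tm_tsubst j B (MUnquote a M) = unquote_seq (tv_subst j B a) (tm_tsubst j B M)"
| "tm_tsubst j B (MTLam M) = MTLam (tm_tsubst (Suc j) (map Suc B) M)"
| "tm_tsubst j B (MTApp M A) = MTApp (tm_tsubst j B M) (trans_subst j B A)"

primrec tm_shift :: "nat \<Rightarrow> tm \<Rightarrow> tm" where
  "tm_shift c (MVar x) = MVar (if c \<le> x then Suc x else x)"
| "tm_shift c (MNum n) = MNum n"
| "tm_shift c (MBool b) = MBool b"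
| "tm_shift c (MEq M N) = MEq (tm_shift c M) (tm_shift c N)"
| "tm_shift c (MPlus M N) = MPlus (tm_shift c M) (tm_shift c N)"
| "tm_shift c (MMinus M N) = MMinus (tm_shift c M) (tm_shift c N)"
| "tm_shift c (MTimes M N) = MTimes (tm_shift c M) (tm_shift c N)"
| "tm_shift c (MIf L M N) = MIf (tm_shift c L) (tm_shift c M) (tm_shift c N)"
| "tm_shift c (MFix \<tau> \<sigma> M) = MFix \<tau> \<sigma> (tm_shift (Suc c) M)"
| "tm_shift c (MLam \<tau> M) = MLam \<tau> (tm_shift (Suc c) M)"
| "tm_shift c (MApp M N) = MApp (tm_shift c M) (tm_shift c N)"
| "tm_shift c (MQuote a M) = MQuote a (tm_shift c M)"
| "tm_shift c (MUnquote a M) = MUnquote a (tm_shift c M)"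
| "tm_shift c (MTLam M) = MTLam (tm_shift c M)"
| "tm_shift c (MTApp M A) = MTApp (tm_shift c M) A"

primrec tm_subst :: "nat \<Rightarrow> tm \<Rightarrow> tm \<Rightarrow> tm" where
  "tm_subst j v (MVar x) = (if x = j then v else if j < x then MVar (x - 1) else MVar x)"
| "tm_subst j v (MNum n) = MNum n"
| "tm_subst j v (MBool b) = MBool b"
| "tm_subst j v (MEq M N) = MEq (tm_subst j v M) (tm_subst j v N)"
| "tm_subst j v (MPlus M N) = MPlus (tm_subst j v M) (tm_subst j v N)"
| "tm_subst j v (MMinus M N) = MMinus (tm_subst j v M) (tm_subst j v N)"
| "tm_subst j v (MTimes M N) = MTimes (tm_subst j v M) (tm_subst j v N)"
| "tm_subst j v (MIf L M N) = MIf (tm_subst j v L) (tm_subst j v M) (tm_subst j v N)"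
| "tm_subst j v (MFix \<tau> \<sigma> M) = MFix \<tau> \<sigma> (tm_subst (Suc j) (tm_shift 0 v) M)"
| "tm_subst j v (MLam \<tau> M) = MLam \<tau> (tm_subst (Suc j) (tm_shift 0 v) M)"
| "tm_subst j v (MApp M N) = MApp (tm_subst j v M) (tm_subst j v N)"
| "tm_subst j v (MQuote a M) = MQuote a (tm_subst j v M)"
| "tm_subst j v (MUnquote a M) = MUnquote a (tm_subst j v M)"
| "tm_subst j v (MTLam M) = MTLam (tm_subst j (tm_tshift 0 v) M)"
| "tm_subst j v (MTApp M A) = MTApp (tm_subst j v M) A"

(* contexts: term variable index \<mapsto> (type, stage); finite domain assumed separately *)
type_synonym ctx = "nat \<Rightarrow> (ty \<times> trans) option"

definition ctx_ext :: "ctx \<Rightarrow> ty \<Rightarrow> trans \<Rightarrow> ctx" where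
  "ctx_ext \<Gamma> \<tau> A = (\<lambda>i. if i = 0 then Some (\<tau>, A) else \<Gamma> (i - 1))"

definition ctx_tshift :: "ctx \<Rightarrow> ctx" where
  "ctx_tshift \<Gamma> = (\<lambda>i. map_option (\<lambda>(\<tau>, A). (ty_tshift 0 \<tau>, map Suc A)) (\<Gamma> i))"

definition eps_free :: "ctx \<Rightarrow> bool" where
  "eps_free \<Gamma> \<longleftrightarrow> (\<forall>x \<tau> A. \<Gamma> x = Some (\<tau>, A) \<longrightarrow> A \<noteq> [])"

(* \<Gamma>^{-A} = { x:\<tau>@B | x:\<tau>@AB \<in> \<Gamma> } *)
definition ctx_minus :: "ctx \<Rightarrow> trans \<Rightarrow> ctx" where
  "ctx_minus \<Gamma> A = (\<lambda>x. case \<Gamma> x of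
       None \<Rightarrow> None
     | Some (\<tau>, C) \<Rightarrow> if take (length A) C = A then Some (\<tau>, drop (length A) C) else None)"

inductive typing :: "ctx \<Rightarrow> trans \<Rightarrow> tm \<Rightarrow> ty \<Rightarrow> bool" where
  T_Var: "\<Gamma> x = Some (\<tau>, A) \<Longrightarrow> typing \<Gamma> A (MVar x) \<tau>"
| T_Num: "typing \<Gamma> A (MNum n) TInt"
| T_Bool: "typing \<Gamma> A (MBool b) TBool"
| T_Eq: "typing \<Gamma> A M TInt \<Longrightarrow> typing \<Gamma> A N TInt \<Longrightarrow> typing \<Gamma> A (MEq M N) TBool"
| T_Plus: "typing \<Gamma> A M TInt \<Longrightarrow> typing \<Gamma> A N TInt \<Longrightarrow> typing \<Gamma> A (MPlus M N) TInt"
| T_Minus: "typing \<Gamma> A M TInt \<Longrightarrow> typing \<Gamma> A N TInt \<Longrightarrow> typing \<Gamma> A (MMinus M N) TInt"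
| T_Times: "typing \<Gamma> A M TInt \<Longrightarrow> typing \<Gamma> A N TInt \<Longrightarrow> typing \<Gamma> A (MTimes M N) TInt"
| T_If: "typing \<Gamma> A L TBool \<Longrightarrow> typing \<Gamma> A M \<tau> \<Longrightarrow> typing \<Gamma> A N \<tau> \<Longrightarrow> typing \<Gamma> A (MIf L M N) \<tau>"
| T_Fix: "typing (ctx_ext \<Gamma> (TFun \<tau> \<sigma>) A) A M (TFun \<tau> \<sigma>) \<Longrightarrow> typing \<Gamma> A (MFix \<tau> \<sigma> M) (TFun \<tau> \<sigma>)"
| T_Abs: "typing (ctx_ext \<Gamma> \<tau> A) A M \<sigma> \<Longrightarrow> typing \<Gamma> A (MLam \<tau> M) (TFun \<tau> \<sigma>)"
| T_App: "typing \<Gamma> A M (TFun \<tau> \<sigma>) \<Longrightarrow> typing \<Gamma> A N \<tau> \<Longrightarrow> typing \<Gamma> A (MApp M N) \<sigma>"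
| T_Quote: "typing \<Gamma> (A @ [a]) M \<tau> \<Longrightarrow> typing \<Gamma> A (MQuote a M) (TNext a \<tau>)"
| T_Unquote: "typing \<Gamma> A M (TNext a \<tau>) \<Longrightarrow> typing \<Gamma> (A @ [a]) (MUnquote a M) \<tau>"
| T_Gen: "typing (ctx_tshift \<Gamma>) (map Suc A) M \<tau> \<Longrightarrow> typing \<Gamma> A (MTLam M) (TAll \<tau>)"
| T_Ins: "typing \<Gamma> A M (TAll \<tau>) \<Longrightarrow> typing \<Gamma> A (MTApp M B) (ty_tsubst 0 B \<tau>)"

inductive is_val :: "trans \<Rightarrow> tm \<Rightarrow> bool" where
  V0_Num: "is_val [] (MNum n)"
| V0_Bool: "is_val [] (MBool b)"
| V0_Lam: "is_val [] (MLam \<tau> M)"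
| V0_Quote: "is_val [a] V \<Longrightarrow> is_val [] (MQuote a V)"
| V0_TLam: "is_val [] V \<Longrightarrow> is_val [] (MTLam V)"
| V_Var: "A \<noteq> [] \<Longrightarrow> is_val A (MVar x)"
| V_Num: "A \<noteq> [] \<Longrightarrow> is_val A (MNum n)"
| V_Bool: "A \<noteq> [] \<Longrightarrow> is_val A (MBool b)"
| V_Eq: "A \<noteq> [] \<Longrightarrow> is_val A V \<Longrightarrow> is_val A W \<Longrightarrow> is_val A (MEq V W)"
| V_Plus: "A \<noteq> [] \<Longrightarrow> is_val A V \<Longrightarrow> is_val A W \<Longrightarrow> is_val A (MPlus V W)"
| V_Minus: "A \<noteq> [] \<Longrightarrow> is_val A V \<Longrightarrow> is_val A W \<Longrightarrow> is_val A (MMinus V W)"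
| V_Times: "A \<noteq> [] \<Longrightarrow> is_val A V \<Longrightarrow> is_val A W \<Longrightarrow> is_val A (MTimes V W)"
| V_If: "A \<noteq> [] \<Longrightarrow> is_val A U \<Longrightarrow> is_val A V \<Longrightarrow> is_val A W \<Longrightarrow> is_val A (MIf U V W)"
| V_Lam: "A \<noteq> [] \<Longrightarrow> is_val A V \<Longrightarrow> is_val A (MLam \<tau> V)"
| V_Fix: "A \<noteq> [] \<Longrightarrow> is_val A V \<Longrightarrow> is_val A (MFix \<tau> \<sigma> V)"
| V_App: "A \<noteq> [] \<Longrightarrow> is_val A V \<Longrightarrow> is_val A W \<Longrightarrow> is_val A (MApp V W)"
| V_Quote: "A \<noteq> [] \<Longrightarrow> is_val (A @ [a]) V \<Longrightarrow> is_val A (MQuote a V)"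
| V_TLam: "A \<noteq> [] \<Longrightarrow> is_val (map Suc A) V \<Longrightarrow> is_val A (MTLam V)"
| V_TApp: "A \<noteq> [] \<Longrightarrow> is_val A V \<Longrightarrow> is_val A (MTApp V B)"
| V_Unquote: "A' \<noteq> [] \<Longrightarrow> is_val A' V \<Longrightarrow> is_val (A' @ [a]) (MUnquote a V)"

datatype res = Res tm | Err

definition is_num :: "tm \<Rightarrow> bool" where "is_num v \<longleftrightarrow> (\<exists>n. v = MNum n)"
definition is_bool :: "tm \<Rightarrow> bool" where "is_bool v \<longleftrightarrow> (\<exists>b. v = MBool b)"
definition is_lam :: "tm \<Rightarrow> bool" where "is_lam v \<longleftrightarrow> (\<exists>\<tau> M. v = MLam \<tau> M)"
definition is_tlam :: "tm \<Rightarrow> bool" where "is_tlam v \<longleftrightarrow> (\<exists>M. v = MTLam M)"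
definition is_quote :: "tvar \<Rightarrow> tm \<Rightarrow> bool" where "is_quote a v \<longleftrightarrow> (\<exists>N. v = MQuote a N)"

(* binary operators, for uniform treatment of evaluation rules *)
datatype binop = OEq | OPlus | OMinus | OTimes

fun mkbin :: "binop \<Rightarrow> tm \<Rightarrow> tm \<Rightarrow> tm" where
  "mkbin OEq M N = MEq M N"
| "mkbin OPlus M N = MPlus M N"
| "mkbin OMinus M N = MMinus M N"
| "mkbin OTimes M N = MTimes M N"

fun binop_val :: "binop \<Rightarrow> int \<Rightarrow> int \<Rightarrow> tm" where
  "binop_val OEq n m = MBool (n = m)"
| "binop_val OPlus n m = MNum (n + m)"
| "binop_val OMinus n m = MNum (n - m)"
| "binop_val OTimes n m = MNum (n * m)"

inductive eval :: "trans \<Rightarrow> tm \<Rightarrow> res \<Rightarrow> bool" where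
  E_Num: "eval [] (MNum n) (Res (MNum n))"
| E_Bool: "eval [] (MBool b) (Res (MBool b))"
| E_Lam: "eval [] (MLam \<tau> M) (Res (MLam \<tau> M))"
| E_VarErr: "eval [] (MVar x) Err"
| E_Bin: "eval [] M (Res (MNum n)) \<Longrightarrow> eval [] N (Res (MNum m)) \<Longrightarrow>
          eval [] (mkbin op M N) (Res (binop_val op n m))"
| E_BinErr1: "eval [] M Err \<Longrightarrow> eval [] (mkbin op M N) Err"
| E_BinErr2: "eval [] M (Res v) \<Longrightarrow> eval [] N Err \<Longrightarrow> eval [] (mkbin op M N) Err"
| E_BinErr3: "eval [] M (Res v) \<Longrightarrow> eval [] N (Res w) \<Longrightarrow> \<not> (is_num v \<and> is_num w) \<Longrightarrow>
          eval [] (mkbin op M N) Err"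
| E_IfT: "eval [] L (Res (MBool True)) \<Longrightarrow> eval [] M R \<Longrightarrow> eval [] (MIf L M N) R"
| E_IfF: "eval [] L (Res (MBool False)) \<Longrightarrow> eval [] N R \<Longrightarrow> eval [] (MIf L M N) R"
| E_IfErr1: "eval [] L Err \<Longrightarrow> eval [] (MIf L M N) Err"
| E_IfErr2: "eval [] L (Res v) \<Longrightarrow> \<not> is_bool v \<Longrightarrow> eval [] (MIf L M N) Err"
| E_App: "eval [] M (Res (MLam \<tau> M')) \<Longrightarrow> eval [] N (Res v) \<Longrightarrow> eval [] (tm_subst 0 v M') R \<Longrightarrow>
          eval [] (MApp M N) R"
| E_AppErr1: "eval [] M Err \<Longrightarrow> eval [] (MApp M N) Err"
| E_AppErr2: "eval [] M (Res f) \<Longrightarrow> eval [] N Err \<Longrightarrow> eval [] (MApp M N) Err"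
| E_AppErr3: "eval [] M (Res f) \<Longrightarrow> eval [] N (Res v) \<Longrightarrow> \<not> is_lam f \<Longrightarrow> eval [] (MApp M N) Err"
| E_Fix: "eval [] (tm_subst 0 (MFix \<tau> \<sigma> M) M) R \<Longrightarrow> eval [] (MFix \<tau> \<sigma> M) R"
| E_TApp: "eval [] M (Res (MTLam N)) \<Longrightarrow> eval [] (tm_tsubst 0 B N) R \<Longrightarrow> eval [] (MTApp M B) R"
| E_TAppErr1: "eval [] M Err \<Longrightarrow> eval [] (MTApp M B) Err"
| E_TAppErr2: "eval [] M (Res v) \<Longrightarrow> \<not> is_tlam v \<Longrightarrow> eval [] (MTApp M B) Err"
| E_Unq0: "eval [] (MUnquote a M) Err"
| E_Quote: "eval (A @ [a]) M (Res N) \<Longrightarrow> eval A (MQuote a M) (Res (MQuote a N))"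
| E_QuoteErr: "eval (A @ [a]) M Err \<Longrightarrow> eval A (MQuote a M) Err"
| E_TLam: "eval (map Suc A) M (Res N) \<Longrightarrow> eval A (MTLam M) (Res (MTLam N))"
| E_TLamErr: "eval (map Suc A) M Err \<Longrightarrow> eval A (MTLam M) Err"
| E_Unq1: "eval [] M (Res (MQuote a N)) \<Longrightarrow> eval [a] (MUnquote a M) (Res N)"
| E_Unq1Err1: "eval [] M Err \<Longrightarrow> eval [a] (MUnquote a M) Err"
| E_Unq1Err2: "eval [] M (Res v) \<Longrightarrow> \<not> is_quote a v \<Longrightarrow> eval [a] (MUnquote a M) Err"
| E_UnqN: "A \<noteq> [] \<Longrightarrow> eval A M (Res N) \<Longrightarrow> eval (A @ [a]) (MUnquote a M) (Res (MUnquote a N))"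
| E_UnqNErr: "A \<noteq> [] \<Longrightarrow> eval A M Err \<Longrightarrow> eval (A @ [a]) (MUnquote a M) Err"
  (* stages A \<noteq> epsilon: rebuild *)
| F_Var: "A \<noteq> [] \<Longrightarrow> eval A (MVar x) (Res (MVar x))"
| F_Num: "A \<noteq> [] \<Longrightarrow> eval A (MNum n) (Res (MNum n))"
| F_Bool: "A \<noteq> [] \<Longrightarrow> eval A (MBool b) (Res (MBool b))"
| F_Bin: "A \<noteq> [] \<Longrightarrow> eval A M (Res M') \<Longrightarrow> eval A N (Res N') \<Longrightarrow>
          eval A (mkbin op M N) (Res (mkbin op M' N'))"
| F_BinErr1: "A \<noteq> [] \<Longrightarrow> eval A M Err \<Longrightarrow> eval A (mkbin op M N) Err"
| F_BinErr2: "A \<noteq> [] \<Longrightarrow> eval A M (Res M') \<Longrightarrow> eval A N Err \<Longrightarrow> eval A (mkbin op M N) Err"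
| F_If: "A \<noteq> [] \<Longrightarrow> eval A L (Res L') \<Longrightarrow> eval A M (Res M') \<Longrightarrow> eval A N (Res N') \<Longrightarrow>
          eval A (MIf L M N) (Res (MIf L' M' N'))"
| F_IfErr1: "A \<noteq> [] \<Longrightarrow> eval A L Err \<Longrightarrow> eval A (MIf L M N) Err"
| F_IfErr2: "A \<noteq> [] \<Longrightarrow> eval A L (Res L') \<Longrightarrow> eval A M Err \<Longrightarrow> eval A (MIf L M N) Err"
| F_IfErr3: "A \<noteq> [] \<Longrightarrow> eval A L (Res L') \<Longrightarrow> eval A M (Res M') \<Longrightarrow> eval A N Err \<Longrightarrow>
          eval A (MIf L M N) Err"
| F_Fix: "A \<noteq> [] \<Longrightarrow> eval A M (Res N) \<Longrightarrow> eval A (MFix \<tau> \<sigma> M) (Res (MFix \<tau> \<sigma> N))"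
| F_FixErr: "A \<noteq> [] \<Longrightarrow> eval A M Err \<Longrightarrow> eval A (MFix \<tau> \<sigma> M) Err"
| F_Lam: "A \<noteq> [] \<Longrightarrow> eval A M (Res N) \<Longrightarrow> eval A (MLam \<tau> M) (Res (MLam \<tau> N))"
| F_LamErr: "A \<noteq> [] \<Longrightarrow> eval A M Err \<Longrightarrow> eval A (MLam \<tau> M) Err"
| F_App: "A \<noteq> [] \<Longrightarrow> eval A M (Res M') \<Longrightarrow> eval A N (Res N') \<Longrightarrow>
          eval A (MApp M N) (Res (MApp M' N'))"
| F_AppErr1: "A \<noteq> [] \<Longrightarrow> eval A M Err \<Longrightarrow> eval A (MApp M N) Err"
| F_AppErr2: "A \<noteq> [] \<Longrightarrow> eval A M (Res M') \<Longrightarrow> eval A N Err \<Longrightarrow> eval A (MApp M N) Err"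
| F_TApp: "A \<noteq> [] \<Longrightarrow> eval A M (Res N) \<Longrightarrow> eval A (MTApp M B) (Res (MTApp N B))"
| F_TAppErr: "A \<noteq> [] \<Longrightarrow> eval A M Err \<Longrightarrow> eval A (MTApp M B) Err"

end

theory Submission
  imports Defs
begin

lemma next_seq_append: "next_seq (X @ Y) t = next_seq X (next_seq Y t)"
  by (induct X) auto

lemma tv_shift_comm: "i \<le> c \<Longrightarrow> tv_shift (Suc c) (tv_shift i a) = tv_shift i (tv_shift c a)"
  by (auto simp: tv_shift_def)

lemma ty_tshift_comm: "i \<le> c \<Longrightarrow> ty_tshift (Suc c) (ty_tshift i t) = ty_tshift i (ty_tshift c t)"
  by (induct t arbitrary: i c) (auto simp: tv_shift_comm)

lemma next_seq_tshift: "ty_tshift c (next_seq D t) = next_seq (map (tv_shift c) D) (ty_tshift c t)"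
  by (induct D) auto

lemma comp_shift[simp]: "tv_shift (Suc c) \<circ> Suc = Suc \<circ> tv_shift c"
  by (auto simp: tv_shift_def)

lemma map_shift_Suc: "map (tv_shift (Suc c)) (map Suc B) = map Suc (map (tv_shift c) B)"
  by (auto simp: tv_shift_def)

lemma tv_shift_subst: "j \<le> c \<Longrightarrow> map (tv_shift c) (tv_subst j B a) = tv_subst j (map (tv_shift c) B) (tv_shift (Suc c) a)"
  by (auto simp: tv_shift_def tv_subst_def)

lemma ty_shift_subst: "j \<le> c \<Longrightarrow> ty_tshift c (ty_tsubst j B t) = ty_tsubst j (map (tv_shift c) B) (ty_tshift (Suc c) t)"
  by (induct t arbitrary: j c B) (auto simp: next_seq_tshift tv_shift_subst map_shift_Suc)

lemma next_seq_tsubst: "ty_tsubst j B (next_seq D t) = next_seq (trans_subst j B D) (ty_tsubst j B t)"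
  by (induct D) (auto simp: trans_subst_def next_seq_append)

lemma tv_subst_shift: "c \<le> j \<Longrightarrow> tv_subst (Suc j) (map (tv_shift c) B) (tv_shift c a) = map (tv_shift c) (tv_subst j B a)"
  by (auto simp: tv_shift_def tv_subst_def)

lemma ty_subst_shift: "c \<le> j \<Longrightarrow> ty_tsubst (Suc j) (map (tv_shift c) B) (ty_tshift c t) = ty_tshift c (ty_tsubst j B t)"
proof (induct t arbitrary: j c B)
  case (TAll t)
  from TAll.hyps[of "Suc c" "Suc j" "map Suc B"] TAll.prems show ?case by simp
qed (auto simp: next_seq_tshift tv_subst_shift map_shift_Suc)

lemma trans_subst_Suc: "trans_subst (Suc j) (map Suc B) (map Suc C) = map Suc (trans_subst j B C)"
  by (induct C) (auto simp: trans_subst_def tv_subst_def)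

lemma trans_subst_shift_cancel: "trans_subst i X (map (tv_shift i) B) = B"
  by (induct B) (auto simp: trans_subst_def tv_subst_def tv_shift_def)

lemma tv_subst_subst: "i \<le> j \<Longrightarrow> trans_subst j B (tv_subst i C a) = trans_subst i (trans_subst j B C) (tv_subst (Suc j) (map (tv_shift i) B) a)"
  by (auto simp: tv_subst_def trans_subst_shift_cancel) (auto simp: trans_subst_def tv_subst_def)

lemma ty_subst_subst: "i \<le> j \<Longrightarrow> ty_tsubst j B (ty_tsubst i C t) = ty_tsubst i (trans_subst j B C) (ty_tsubst (Suc j) (map (tv_shift i) B) t)"
  by (induct t arbitrary: i j B C) (auto simp: next_seq_tsubst tv_subst_subst trans_subst_Suc map_shift_Suc)

lemma ty_subst_shift_cancel: "ty_tsubst c B (ty_tshift c t) = t"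
  by (induct t arbitrary: c B) (auto simp: tv_subst_def tv_shift_def)

lemma trans_subst_shift_cancel2: "trans_subst c B (map (tv_shift c) A) = A"
  by (rule trans_subst_shift_cancel)


definition ctx_tshiftc :: "nat \<Rightarrow> ctx \<Rightarrow> ctx" where
  "ctx_tshiftc c G = (\<lambda>i. map_option (\<lambda>(t, A). (ty_tshift c t, map (tv_shift c) A)) (G i))"

definition ctx_tsubst :: "nat \<Rightarrow> trans \<Rightarrow> ctx \<Rightarrow> ctx" where
  "ctx_tsubst j B G = (\<lambda>i. map_option (\<lambda>(t, A). (ty_tsubst j B t, trans_subst j B A)) (G i))"

definition ctx_ins :: "nat \<Rightarrow> ctx \<Rightarrow> ty \<Rightarrow> trans \<Rightarrow> ctx" where
  "ctx_ins j G t C = (\<lambda>i. if i < j then G i else if i = j then Some (t, C) else G (i - 1))"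

lemma tv_shift0: "tv_shift 0 = Suc" by (auto simp: tv_shift_def)

lemma ctx_tshift_0: "ctx_tshift G = ctx_tshiftc 0 G"
  by (simp add: ctx_tshift_def ctx_tshiftc_def tv_shift0)

lemma typing_quote_seq: "typing G (A @ C) M t \<Longrightarrow> typing G A (quote_seq C M) (next_seq C t)"
  by (induct C arbitrary: A) (auto intro!: typing.T_Quote)

lemma typing_unquote_seq: "typing G A M (next_seq C t) \<Longrightarrow> typing G (A @ C) (unquote_seq C M) t"
proof (induct C arbitrary: A M)
  case (Cons b bs)
  then have "typing G (A @ [b]) (MUnquote b M) (next_seq bs t)" by (auto intro: typing.T_Unquote)
  from Cons.hyps[OF this] show ?case by simp
qed simp

lemma typing_tshift:
  "typing G A M t \<Longrightarrow> typing (ctx_tshiftc c G) (map (tv_shift c) A) (tm_tshift c M) (ty_tshift c t)"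
proof (induct arbitrary: c rule: typing.induct)
  case (T_Var G x t A)
  then show ?case by (auto intro!: typing.T_Var simp: ctx_tshiftc_def)
next
  case (T_Fix G t s A M)
  have "ctx_tshiftc c (ctx_ext G (TFun t s) A) = ctx_ext (ctx_tshiftc c G) (TFun (ty_tshift c t) (ty_tshift c s)) (map (tv_shift c) A)"
    by (auto simp: ctx_tshiftc_def ctx_ext_def)
  then show ?case using T_Fix.hyps(2)[of c] by (auto intro!: typing.T_Fix)
next
  case (T_Abs G t A M s)
  have "ctx_tshiftc c (ctx_ext G t A) = ctx_ext (ctx_tshiftc c G) (ty_tshift c t) (map (tv_shift c) A)"
    by (auto simp: ctx_tshiftc_def ctx_ext_def)
  then show ?case using T_Abs.hyps(2)[of c] by (auto intro!: typing.T_Abs)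
next
  case (T_Quote G A a M t)
  then show ?case by (auto intro!: typing.T_Quote)
next
  case (T_Unquote G A M a t)
  then have "typing (ctx_tshiftc c G) (map (tv_shift c) A @ [tv_shift c a]) (MUnquote (tv_shift c a) (tm_tshift c M)) (ty_tshift c t)"
    by (auto intro!: typing.T_Unquote)
  then show ?case by simp
next
  case (T_Gen G A M t)
  have e1: "ctx_tshiftc (Suc c) (ctx_tshift G) = ctx_tshift (ctx_tshiftc c G)"
  proof (rule ext)
    fix x show "ctx_tshiftc (Suc c) (ctx_tshift G) x = ctx_tshift (ctx_tshiftc c G) x"
      by (cases "G x") (auto simp: ctx_tshiftc_def ctx_tshift_def ty_tshift_comm[of 0, simplified] tv_shift0 map_shift_Suc)
  qed
  from T_Gen.hyps(2)[of "Suc c"] show ?case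
    by (auto intro!: typing.T_Gen simp: e1)
next
  case (T_Ins G A M t B)
  from typing.T_Ins[OF T_Ins.hyps(2)[of c, simplified], of "map (tv_shift c) B"] show ?case
    by (simp add: ty_shift_subst)
qed (auto intro: typing.intros)

lemma typing_tsubst:
  "typing G A M t \<Longrightarrow> typing (ctx_tsubst j B G) (trans_subst j B A) (tm_tsubst j B M) (ty_tsubst j B t)"
proof (induct arbitrary: j B rule: typing.induct)
  case (T_Var G x t A)
  then show ?case by (auto intro!: typing.T_Var simp: ctx_tsubst_def)
next
  case (T_Fix G t s A M)
  have "ctx_tsubst j B (ctx_ext G (TFun t s) A) = ctx_ext (ctx_tsubst j B G) (TFun (ty_tsubst j B t) (ty_tsubst j B s)) (trans_subst j B A)"
    by (auto simp: ctx_tsubst_def ctx_ext_def)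
  then show ?case using T_Fix.hyps(2)[of j B] by (auto intro!: typing.T_Fix)
next
  case (T_Abs G t A M s)
  have "ctx_tsubst j B (ctx_ext G t A) = ctx_ext (ctx_tsubst j B G) (ty_tsubst j B t) (trans_subst j B A)"
    by (auto simp: ctx_tsubst_def ctx_ext_def)
  then show ?case using T_Abs.hyps(2)[of j B] by (auto intro!: typing.T_Abs)
next
  case (T_Quote G A a M t)
  then show ?case by (auto intro!: typing_quote_seq simp: trans_subst_def)
next
  case (T_Unquote G A M a t)
  from typing_unquote_seq[OF T_Unquote.hyps(2)[of j B, simplified]] show ?case
    by (simp add: trans_subst_def)
next
  case (T_Gen G A M t)
  have e1: "ctx_tsubst (Suc j) (map Suc B) (ctx_tshift G) = ctx_tshift (ctx_tsubst j B G)"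
  proof (rule ext)
    fix x show "ctx_tsubst (Suc j) (map Suc B) (ctx_tshift G) x = ctx_tshift (ctx_tsubst j B G) x"
      using ty_subst_shift[of 0 j B] trans_subst_Suc[of j B]
      by (cases "G x") (auto simp: ctx_tsubst_def ctx_tshift_def tv_shift0)
  qed
  from T_Gen.hyps(2)[of "Suc j" "map Suc B"] show ?case
    by (auto intro!: typing.T_Gen simp: e1 trans_subst_Suc)
next
  case (T_Ins G A M t C)
  from typing.T_Ins[OF T_Ins.hyps(2)[of j B, simplified], of "trans_subst j B C"] show ?case
    by (simp add: ty_subst_subst tv_shift0)
next
  case (T_App G A M t1 s N)
  from typing.T_App[OF T_App.hyps(2)[of j B, simplified] T_App.hyps(4)[of j B]] show ?case by simp
qed (auto intro: typing.intros)

lemma ctx_tshift_ins: "ctx_tshift (ctx_ins c G s B) = ctx_ins c (ctx_tshift G) (ty_tshift 0 s) (map Suc B)"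
  by (auto simp: ctx_tshift_def ctx_ins_def fun_eq_iff)

lemma ctx_ext_ins: "ctx_ext (ctx_ins c G s B) t A = ctx_ins (Suc c) (ctx_ext G t A) s B"
  by (auto simp: ctx_ext_def ctx_ins_def fun_eq_iff)

lemma typing_weaken:
  "typing G A M t \<Longrightarrow> typing (ctx_ins c G s B) A (tm_shift c M) t"
proof (induct arbitrary: c s B rule: typing.induct)
  case (T_Var G x t A)
  then show ?case by (auto intro!: typing.T_Var simp: ctx_ins_def)
next
  case (T_Gen G A M t)
  then show ?case by (auto intro!: typing.T_Gen simp: ctx_tshift_ins)
next
  case (T_Fix G t1 t2 A M)
  then show ?case using T_Fix.hyps(2)[of "Suc c" s B] by (auto intro!: typing.T_Fix simp: ctx_ext_ins)
next
  case (T_Abs G t1 A M t2)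
  then show ?case using T_Abs.hyps(2)[of "Suc c" s B] by (auto intro!: typing.T_Abs simp: ctx_ext_ins)
qed (auto intro!: typing.intros)

lemma ctx_ins0: "ctx_ins 0 G t A = ctx_ext G t A"
  by (auto simp: ctx_ins_def ctx_ext_def fun_eq_iff)

lemma typing_subst:
  "typing G' A M s \<Longrightarrow> G' = ctx_ins j G t C \<Longrightarrow> typing G C v t \<Longrightarrow> typing G A (tm_subst j v M) s"
proof (induct arbitrary: G j v t C rule: typing.induct)
  case (T_Var G' x s A)
  then show ?case by (auto intro!: typing.T_Var simp: ctx_ins_def split: if_splits)
next
  case (T_Fix G' s1 s2 A M)
  have w: "typing (ctx_ext G (TFun s1 s2) A) C (tm_shift 0 v) t"
    using typing_weaken[of _ _ _ _ 0 "TFun s1 s2" A, unfolded ctx_ins0, OF T_Fix.prems(2)] .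
  have "ctx_ext G' (TFun s1 s2) A = ctx_ins (Suc j) (ctx_ext G (TFun s1 s2) A) t C"
    using T_Fix.prems(1) by (simp add: ctx_ext_ins)
  from T_Fix.hyps(2)[OF this] w show ?case
    by (auto intro!: typing.T_Fix simp: ctx_ext_def ctx_ins_def fun_eq_iff)
next
  case (T_Abs G' s1 A M s2)
  have w: "typing (ctx_ext G s1 A) C (tm_shift 0 v) t"
    using typing_weaken[of _ _ _ _ 0 "s1" A, unfolded ctx_ins0, OF T_Abs.prems(2)] .
  have "ctx_ext G' s1 A = ctx_ins (Suc j) (ctx_ext G s1 A) t C"
    using T_Abs.prems(1) by (simp add: ctx_ext_ins)
  from T_Abs.hyps(2)[OF this] w show ?case
    by (auto intro!: typing.T_Abs simp: ctx_ext_def ctx_ins_def fun_eq_iff)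
next
  case (T_Gen G' A M s)
  have w: "typing (ctx_tshift G) (map Suc C) (tm_tshift 0 v) (ty_tshift 0 t)"
    using typing_tshift[OF T_Gen.prems(2), of 0] by (simp add: ctx_tshift_0 tv_shift0)
  from T_Gen.hyps(2)[OF _ w] T_Gen.prems(1) show ?case
    by (auto intro!: typing.T_Gen simp: ctx_tshift_ins)
next
  case (T_App G' A M t1 s N)
  then have "typing G A (tm_subst j v M) (TFun t1 s)" "typing G A (tm_subst j v N) t1" by blast+
  then show ?case by (auto intro: typing.T_App)
qed (auto intro: typing.intros)


inductive_cases valQ0: "is_val [] (MQuote a V)"

lemma is_val_mkbin: "A \<noteq> [] \<Longrightarrow> is_val A V \<Longrightarrow> is_val A W \<Longrightarrow> is_val A (mkbin op V W)"
  by (cases op) (auto intro: is_val.intros)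

lemma is_val_binop: "is_val [] (binop_val op n m)"
  by (cases op) (auto intro: is_val.intros)

lemma eval_val: "eval A M R \<Longrightarrow> R = Res v \<Longrightarrow> is_val A v"
proof (induct arbitrary: v rule: eval.induct)
  case (E_Unq1 M a N)
  then show ?case by (auto elim: valQ0)
next
  case (E_TLam A M N)
  then show ?case by (cases "A = []") (auto intro: is_val.intros)
next
  case (E_Quote A a M N)
  then show ?case by (cases "A = []") (auto intro: is_val.intros)
qed (auto intro: is_val.intros is_val_mkbin is_val_binop)

inductive_cases tyVar: "typing G A (MVar x) t"
inductive_cases tyNum: "typing G A (MNum n) t"
inductive_cases tyBool: "typing G A (MBool b) t"
inductive_cases tyEq: "typing G A (MEq M N) t"
inductive_cases tyPlus: "typing G A (MPlus M N) t"
inductive_cases tyMinus: "typing G A (MMinus M N) t"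
inductive_cases tyTimes: "typing G A (MTimes M N) t"
inductive_cases tyIf: "typing G A (MIf L M N) t"
inductive_cases tyFix: "typing G A (MFix t1 t2 M) t"
inductive_cases tyLam: "typing G A (MLam t1 M) t"
inductive_cases tyApp: "typing G A (MApp M N) t"
inductive_cases tyQuote: "typing G A (MQuote a M) t"
inductive_cases tyUnq: "typing G A (MUnquote a M) t"
inductive_cases tyTLam: "typing G A (MTLam M) t"
inductive_cases tyTApp: "typing G A (MTApp M B) t"

lemma ty_mkbin: "typing G A (mkbin op M N) t \<Longrightarrow>
   typing G A M TInt \<and> typing G A N TInt \<and> t = (if op = OEq then TBool else TInt)"
  by (cases op) (auto elim: tyEq tyPlus tyMinus tyTimes)

lemma ty_mkbin_I: "typing G A M TInt \<Longrightarrow> typing G A N TInt \<Longrightarrow>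
   typing G A (mkbin op M N) (if op = OEq then TBool else TInt)"
  by (cases op) (auto intro: typing.intros)

lemma ty_binop_val: "typing G A (binop_val op n m) (if op = OEq then TBool else TInt)"
  by (cases op) (auto intro: typing.intros)

lemma canon_int: "is_val [] v \<Longrightarrow> typing G [] v TInt \<Longrightarrow> is_num v"
  by (induct "[]::trans" v rule: is_val.induct) (auto simp: is_num_def elim: tyLam tyBool tyQuote tyTLam)

lemma canon_bool: "is_val [] v \<Longrightarrow> typing G [] v TBool \<Longrightarrow> is_bool v"
  by (induct "[]::trans" v rule: is_val.induct) (auto simp: is_bool_def elim: tyLam tyNum tyQuote tyTLam)

lemma canon_fun: "is_val [] v \<Longrightarrow> typing G [] v (TFun t1 t2) \<Longrightarrow> is_lam v"
  by (induct "[]::trans" v rule: is_val.induct) (auto simp: is_lam_def elim: tyNum tyBool tyQuote tyTLam)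

lemma canon_all: "is_val [] v \<Longrightarrow> typing G [] v (TAll t) \<Longrightarrow> is_tlam v"
  by (induct "[]::trans" v rule: is_val.induct) (auto simp: is_tlam_def elim: tyNum tyBool tyQuote tyLam)

lemma canon_next: "is_val [] v \<Longrightarrow> typing G [] v (TNext a t) \<Longrightarrow> is_quote a v"
  by (induct "[]::trans" v rule: is_val.induct) (auto simp: is_quote_def elim: tyNum tyBool tyQuote tyLam tyTLam)


lemma eps_free_tshift: "eps_free G \<Longrightarrow> eps_free (ctx_tshift G)"
  by (auto simp: eps_free_def ctx_tshift_def)

lemma eps_free_ext: "eps_free G \<Longrightarrow> A \<noteq> [] \<Longrightarrow> eps_free (ctx_ext G t A)"
  by (auto simp: eps_free_def ctx_ext_def)

lemma pres: "eval A M R \<Longrightarrow> eps_free G \<Longrightarrow> typing G A M t \<Longrightarrow> \<exists>v. R = Res v \<and> typing G A v t"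
proof (induct arbitrary: G t rule: eval.induct)
  case (E_VarErr x)
  then show ?case by (auto elim!: tyVar simp: eps_free_def)
next
  case (E_Bin M n N m op)
  then show ?case by (auto dest!: ty_mkbin intro: ty_binop_val)
next
  case (E_BinErr1 M op N)
  then show ?case by (auto dest!: ty_mkbin)
next
  case (E_BinErr2 M v N op)
  then show ?case by (auto dest!: ty_mkbin)
next
  case (E_BinErr3 M v N w op)
  then have "typing G [] v TInt" "typing G [] w TInt" by (auto dest!: ty_mkbin)
  with E_BinErr3 have "is_num v" "is_num w" by (auto dest: eval_val canon_int)
  with E_BinErr3 show ?case by auto
next
  case (E_IfErr2 L v M N)
  then show ?case by (auto elim!: tyIf dest: eval_val canon_bool)
next
  case (E_App M t1 M' N v R)
  from E_App.prems obtain s where hM: "typing G [] M (TFun s t)" and hN: "typing G [] N s" by (auto elim: tyApp)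
  from E_App.hyps(2)[OF E_App.prems(1) hM] have "typing G [] (MLam t1 M') (TFun s t)" by auto
  then have hb: "typing (ctx_ext G s []) [] M' t" by (auto elim: tyLam)
  from E_App.hyps(4)[OF E_App.prems(1) hN] obtain hv: "typing G [] v s" by auto
  have "typing G [] (tm_subst 0 v M') t"
    by (rule typing_subst[OF hb _ hv]) (simp add: ctx_ins0)
  with E_App.hyps(6)[OF E_App.prems(1)] show ?case by auto
next
  case (E_AppErr3 M f N v)
  then show ?case by (auto elim!: tyApp dest: eval_val canon_fun)
next
  case (E_Fix t1 s M R)
  from E_Fix.prems(2) have hb: "typing (ctx_ext G (TFun t1 s) []) [] M (TFun t1 s)" and ht: "t = TFun t1 s"
    by (auto elim: tyFix)
  have "typing G [] (tm_subst 0 (MFix t1 s M) M) t"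
    using typing_subst[OF hb, of 0 G "TFun t1 s" "[]" "MFix t1 s M"] E_Fix.prems(2) ht by (simp add: ctx_ins0)
  with E_Fix.hyps(2)[OF E_Fix.prems(1)] show ?case by auto
next
  case (E_TApp M N B R)
  from E_TApp.prems(2) obtain t0 where hM: "typing G [] M (TAll t0)" and ht: "t = ty_tsubst 0 B t0"
    by (auto elim: tyTApp)
  from E_TApp.hyps(2)[OF E_TApp.prems(1) hM] have "typing G [] (MTLam N) (TAll t0)" by auto
  then have "typing (ctx_tshift G) [] N t0" by (auto elim: tyTLam)
  from typing_tsubst[OF this, of 0 B] have "typing (ctx_tsubst 0 B (ctx_tshift G)) [] (tm_tsubst 0 B N) t"
    by (simp add: ht trans_subst_def)
  moreover have "ctx_tsubst 0 B (ctx_tshift G) = G"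
  proof (rule ext)
    fix x show "ctx_tsubst 0 B (ctx_tshift G) x = G x"
      using ty_subst_shift_cancel[of 0 B] trans_subst_shift_cancel[of 0 B]
      by (cases "G x") (auto simp: ctx_tsubst_def ctx_tshift_def tv_shift0)
  qed
  ultimately have "typing G [] (tm_tsubst 0 B N) t" by simp
  with E_TApp.hyps(4)[OF E_TApp.prems(1)] show ?case by auto
next
  case (E_TAppErr2 M v B)
  then show ?case by (auto elim!: tyTApp dest: eval_val canon_all)
next
  case (E_Unq0 a M)
  then show ?case by (auto elim: tyUnq)
next
  case (E_TLam A M N)
  then show ?case by (auto elim!: tyTLam intro!: typing.T_Gen dest: eps_free_tshift)
next
  case (E_TLamErr A M)
  then show ?case by (auto elim!: tyTLam dest: eps_free_tshift)
next
  case (E_Unq1 M a N)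
  from E_Unq1.prems(2) have "typing G [] M (TNext a t)" by (auto elim: tyUnq)
  from E_Unq1.hyps(2)[OF E_Unq1.prems(1) this] show ?case by (auto elim: tyQuote)
next
  case (E_Unq1Err1 M a)
  then show ?case by (auto elim: tyUnq)
next
  case (E_Unq1Err2 M v a)
  from E_Unq1Err2.prems(2) have "typing G [] M (TNext a t)" by (auto elim: tyUnq)
  with E_Unq1Err2 show ?case by (auto dest: eval_val canon_next)
next
  case (F_Lam A M N t1)
  then show ?case by (auto elim!: tyLam intro!: typing.T_Abs dest: eps_free_ext)
next
  case (F_LamErr A M t1)
  then show ?case by (auto elim!: tyLam dest: eps_free_ext)
next
  case (F_Fix A M N t1 s)
  then show ?case by (auto elim!: tyFix intro!: typing.T_Fix dest: eps_free_ext)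
next
  case (F_FixErr A M t1 s)
  then show ?case by (auto elim!: tyFix dest: eps_free_ext)
next
  case (F_Bin A M M' N N' op)
  then show ?case by (auto dest!: ty_mkbin intro: ty_mkbin_I)
next
  case (F_BinErr1 A M op N)
  then show ?case by (auto dest!: ty_mkbin)
next
  case (F_BinErr2 A M M' N op)
  then show ?case by (auto dest!: ty_mkbin)
qed (fastforce elim!: tyIf tyApp tyQuote tyUnq tyTApp intro: typing.intros)+


inductive_cases vEq: "is_val B (MEq V W)"
inductive_cases vPlus: "is_val B (MPlus V W)"
inductive_cases vMinus: "is_val B (MMinus V W)"
inductive_cases vTimes: "is_val B (MTimes V W)"
inductive_cases vIf: "is_val B (MIf U V W)"
inductive_cases vLam: "is_val B (MLam t V)"
inductive_cases vFix: "is_val B (MFix t s V)"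
inductive_cases vApp: "is_val B (MApp V W)"
inductive_cases vQuote: "is_val B (MQuote a V)"
inductive_cases vUnq: "is_val B (MUnquote a V)"
inductive_cases vTLam: "is_val B (MTLam V)"
inductive_cases vTApp: "is_val B (MTApp V C)"

lemma ctx_minus_ext: "ctx_minus (ctx_ext G s (a # A)) [a] = ctx_ext (ctx_minus G [a]) s A"
  by (auto simp: ctx_minus_def ctx_ext_def fun_eq_iff)

lemma ctx_minus_tshift: "ctx_minus (ctx_tshift G) [Suc a] = ctx_tshift (ctx_minus G [a])"
proof (rule ext)
  fix x show "ctx_minus (ctx_tshift G) [Suc a] x = ctx_tshift (ctx_minus G [a]) x"
  proof (cases "G x")
    case (Some p)
    then show ?thesis
      by (cases p; cases "snd p") (auto simp: ctx_minus_def ctx_tshift_def)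
  qed (simp add: ctx_minus_def ctx_tshift_def)
qed

lemma lower: "typing G B N t \<Longrightarrow> B = a # A \<Longrightarrow> is_val B N \<Longrightarrow> typing (ctx_minus G [a]) A N t"
proof (induct arbitrary: a A rule: typing.induct)
  case (T_Var G x t B)
  then show ?case by (auto intro!: typing.T_Var simp: ctx_minus_def)
next
  case (T_Fix G t1 t2 B M)
  then show ?case by (auto intro!: typing.T_Fix elim!: vFix simp: ctx_minus_ext[symmetric])
next
  case (T_Abs G t1 B M t2)
  then show ?case by (auto intro!: typing.T_Abs elim!: vLam simp: ctx_minus_ext[symmetric])
next
  case (T_Quote G B b M t)
  then show ?case by (auto intro!: typing.T_Quote elim!: vQuote)
next
  case (T_Unquote G B M b t)
  from T_Unquote.prems(2) have "B \<noteq> []" "is_val B M" by (auto elim: vUnq)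
  then obtain B' where B': "B = a # B'" "A = B' @ [b]" using T_Unquote.prems(1)
    by (cases B) auto
  from T_Unquote.hyps(2)[OF B'(1) \<open>is_val B M\<close>] B'(2) show ?case
    by (auto intro: typing.T_Unquote)
next
  case (T_Gen G B M t)
  from T_Gen.prems have v: "is_val (map Suc B) M" by (auto elim: vTLam)
  from T_Gen.hyps(2)[of "Suc a" "map Suc A"] T_Gen.prems(1) v show ?case
    by (auto intro!: typing.T_Gen simp: ctx_minus_tshift)
next
  case (T_App G B M t1 t2 N)
  then show ?case by (auto intro: typing.T_App elim!: vApp)
qed (auto intro!: typing.intros elim!: vEq vPlus vMinus vTimes vIf vTApp)

theorem mainTheorem13:
  fixes \<Gamma> :: ctx and M :: tm and \<tau> :: ty and R :: res
  assumes "finite (dom \<Gamma>)"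
    and "eps_free \<Gamma>"
    and "typing \<Gamma> [] M \<tau>"
    and "eval [] M R"
  shows "\<exists>v. R = Res v \<and> is_val [] v \<and> typing \<Gamma> [] v \<tau> \<and>
           (\<forall>a \<tau>0. \<tau> = TNext a \<tau>0 \<longrightarrow>
              (\<exists>N. v = MQuote a N \<and> typing (ctx_minus \<Gamma> [a]) [] N \<tau>0))"
proof -
  from pres[OF assms(4) assms(2) assms(3)] obtain v where r: "R = Res v" and ht: "typing \<Gamma> [] v \<tau>" by auto
  from eval_val[OF assms(4) r] have iv: "is_val [] v" .
  have "\<exists>N. v = MQuote a N \<and> typing (ctx_minus \<Gamma> [a]) [] N \<tau>0" if tn: "\<tau> = TNext a \<tau>0" for a \<tau>0
  proof -
    from canon_next[OF iv ht[unfolded tn]] obtain N where vN: "v = MQuote a N" by (auto simp: is_quote_def)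
    from ht tn vN have "typing \<Gamma> [a] N \<tau>0" by (auto elim: tyQuote)
    moreover from iv vN have "is_val [a] N" by (auto elim: valQ0)
    ultimately have "typing (ctx_minus \<Gamma> [a]) [] N \<tau>0" using lower[of \<Gamma> "[a]" N \<tau>0 a "[]"] by simp
    with vN show ?thesis by auto
  qed
  with r iv ht show ?thesis by auto
qed

end
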